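(* Let $F(d)=1/d^2$. Let $(x_n)_{n\in\mathbb Z}$ and $(y_n)_{n\in\mathbb Z}$ be two uniformly discrete configurations such that $\{x_n: x_n\ge0\}=\{y_n: y_n\ge 0\}=:W$ and such that, in each of the two configurations, every particle located at a point of $W$ is in equilibrium. Then $\{x_n:x_n<0\}=\{y_n:y_n<0\}$.
   Context: A configuration is a strictly increasing bi-infinite sequence $(x_n)_{n\in\mathbb Z}$ of reals; it is uniformly discrete if there are constants $0<c\le C<\infty$ with $c\le x_n-x_{n-1}\le C$ for all $n\in\mathbb Z$. With force law $F$ (here $F(d)=1/d^2$), the particle at $x_n$ is in equilibrium if $\sum_{m<n}F(x_n-x_m)$ and $\sum_{m>n}F(x_m-x_n)$ are both finite and equal. *)

theory Defs
  imports "HOL-Analysis.Analysis"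
begin

definition F :: "real \<Rightarrow> real" where
  "F d = 1 / d\<^sup>2"

definition configuration :: "(int \<Rightarrow> real) \<Rightarrow> bool" where
  "configuration x \<longleftrightarrow> strict_mono x"

definition uniformly_discrete :: "(int \<Rightarrow> real) \<Rightarrow> bool" where
  "uniformly_discrete x \<longleftrightarrow> configuration x \<and>
     (\<exists>c C. 0 < c \<and> c \<le> C \<and> (\<forall>n. c \<le> x n - x (n - 1) \<and> x n - x (n - 1) \<le> C))"

definition in_equilibrium :: "(real \<Rightarrow> real) \<Rightarrow> (int \<Rightarrow> real) \<Rightarrow> int \<Rightarrow> bool" where
  "in_equilibrium G x n \<longleftrightarrow>
     (\<lambda>m. G (x n - x m)) summable_on {..<n} \<and>
     (\<lambda>m. G (x m - x n)) summable_on {n<..} \<and>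
     (\<Sum>\<^sub>\<infinity>m\<in>{..<n}. G (x n - x m)) = (\<Sum>\<^sub>\<infinity>m\<in>{n<..}. G (x m - x n))"

end

theory Submission imports Defs "HOL-Complex_Analysis.Complex_Analysis" begin


lemma blaschke_identity:
  fixes a w :: complex
  shows "cmod (1 - cnj a * w)^2 = cmod (w - a)^2 + (1 - cmod a^2) * (1 - cmod w^2)"
  unfolding cmod_power2 by (simp add: algebra_simps power2_eq_square)

lemma blaschke_ratio:
  fixes a w :: complex and r :: real
  assumes "cmod a < r" "cmod w = r" "r \<le> 1"
  shows "cmod (1 - cnj a * w) \<le> (1 + (1 - r^2) / (r - cmod a)^2) * cmod (w - a)"
proof -
  have d: "r - cmod a \<le> cmod (w - a)"
    using assms norm_triangle_ineq2[of w a] by simp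
  have dpos: "0 < r - cmod a" using assms by simp
  define K where "K = 1 + (1 - r^2) / (r - cmod a)^2"
  have r2: "0 \<le> 1 - r^2" using assms norm_ge_zero[of a]
    by (smt (verit) power_le_one)
  have a2: "0 \<le> 1 - cmod a^2" "1 - cmod a^2 \<le> 1"
    using assms by (auto simp: power_le_one)
  have "(1 - cmod a^2) * (1 - r^2) \<le> (1 - r^2)" using r2 a2 by (simp add: mult_left_le_one_le)
  also have "\<dots> = (1 - r^2) / (r - cmod a)^2 * (r - cmod a)^2" using dpos by simp
  also have "\<dots> \<le> (1 - r^2) / (r - cmod a)^2 * cmod (w - a)^2"
    using d dpos r2 by (intro mult_left_mono power_mono) auto
  finally have "cmod (1 - cnj a * w)^2 \<le> K * cmod (w - a)^2"
    using blaschke_identity[of a w] assms by (simp add: K_def algebra_simps)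
  have K1: "K \<ge> 1" unfolding K_def using r2 by simp
  have "cmod (1 - cnj a * w)^2 \<le> (K * cmod (w - a))^2"
  proof -
    have "K * cmod (w - a)^2 \<le> K^2 * cmod (w-a)^2" using K1
      by (intro mult_right_mono) (auto simp: power2_eq_square)
    moreover have "K^2 * cmod (w-a)^2 = (K * cmod (w - a))^2" by (rule power_mult_distrib[symmetric])
    ultimately show ?thesis using \<open>cmod (1 - cnj a * w)^2 \<le> K * cmod (w - a)^2\<close>
      by linarith
  qed
  then have "cmod (1 - cnj a * w) \<le> K * cmod (w - a)"
    by (rule power2_le_imp_le) (use K1 in simp)
  then show ?thesis by (simp add: K_def)
qed


lemma blaschke_div_bound:
  fixes g :: "complex \<Rightarrow> complex" and a :: complex
  assumes holg: "g holomorphic_on ball 0 1" and a: "cmod a < 1"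
    and bnd: "\<And>z. cmod z < 1 \<Longrightarrow> z \<noteq> a \<Longrightarrow> cmod (g z) * cmod (z - a) \<le> M * cmod (1 - cnj a * z)"
    and M: "0 \<le> M"
    and z: "cmod z < 1"
  shows "cmod (g z) \<le> M"
proof -
  define K where "K r = M * (1 + (1 - r^2) / (r - cmod a)^2)" for r :: real
  have le: "cmod (g z) \<le> K r" if r: "max (cmod z) (cmod a) < r" "r < 1" for r
  proof -
    have h1: "g holomorphic_on interior (cball 0 r)"
      using holg r by (auto intro: holomorphic_on_subset)
    have h2: "continuous_on (closure (cball 0 r)) g"
      using holg r by (auto intro!: holomorphic_on_imp_continuous_on intro: holomorphic_on_subset)
    have h3: "bounded (cball (0::complex) r)" by simp
    have h4: "z \<in> cball 0 r" using r by simp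
    have h5: "cmod (g w) \<le> K r" if "w \<in> frontier (cball 0 r)" for w
    proof -
      have w: "cmod w = r" using r that by (simp add: frontier_cball)
      have wa: "w \<noteq> a" using w r by auto
      have pos: "0 < cmod (w - a)" using wa by simp
      have "cmod (g w) * cmod (w - a) \<le> M * cmod (1 - cnj a * w)"
        using bnd[of w] w r wa by simp
      also have "\<dots> \<le> M * ((1 + (1 - r^2) / (r - cmod a)^2) * cmod (w - a))"
        using blaschke_ratio[of a r w] w r M by (intro mult_left_mono) auto
      finally have "cmod (g w) * cmod (w - a) \<le> K r * cmod (w - a)"
        by (simp add: K_def mult.assoc)
      then show "cmod (g w) \<le> K r" using pos by simp
    qed
    show ?thesis by (rule maximum_modulus_frontier[OF h1 h2 h3 h5 h4])
  qed
  have lim: "(K \<longlongrightarrow> K 1) (at_left 1)"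
    unfolding K_def using a by (intro tendsto_intros) auto
  have K1: "K 1 = M" by (simp add: K_def)
  have ev: "eventually (\<lambda>r. cmod (g z) \<le> K r) (at_left (1::real))"
  proof -
    have "max (cmod z) (cmod a) < 1" using z a by simp
    then have "eventually (\<lambda>r. r \<in> {max (cmod z) (cmod a)<..<1}) (at_left (1::real))"
      by (rule eventually_at_left_real)
    then show ?thesis by eventually_elim (use le in auto)
  qed
  show ?thesis
    using tendsto_le[OF _ lim tendsto_const ev] K1 by simp
qed


lemma jensen_finite:
  fixes Z :: "complex set"
  assumes "finite Z"
  shows "f holomorphic_on ball 0 1 \<Longrightarrow> (\<And>z. cmod z < 1 \<Longrightarrow> cmod (f z) \<le> M) \<Longrightarrow> 0 \<le> M \<Longrightarrow>
         Z \<subseteq> ball 0 1 - {0} \<Longrightarrow> (\<And>z. z \<in> Z \<Longrightarrow> f z = 0) \<Longrightarrow>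
         cmod (f 0) \<le> M * (\<Prod>z\<in>Z. cmod z)"
  using assms(1)
proof (induction Z arbitrary: f rule: finite_induct)
  case empty
  then show ?case by simp
next
  case (insert a Z f)
  have a: "cmod a < 1" "a \<noteq> 0" using insert.prems by auto
  have fa: "f a = 0" using insert.prems by auto
  define q where "q z = (if z = a then deriv f a else f z / (z - a))" for z
  have holq: "q holomorphic_on ball 0 1"
    by (rule pole_theorem_open_0[OF insert.prems(1), of a q]) (auto simp: q_def fa)
  define g where "g z = q z * (1 - cnj a * z)" for z
  have holg: "g holomorphic_on ball 0 1"
    unfolding g_def by (intro holomorphic_intros holq)
  have gb: "cmod (g z) \<le> M" if "cmod z < 1" for z
  proof (rule blaschke_div_bound[OF holg a(1) _ insert.prems(3) that])
    fix u assume u: "cmod u < 1" "u \<noteq> a"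
    have "cmod (g u) * cmod (u - a) = cmod (f u) * cmod (1 - cnj a * u)"
      using u by (simp add: g_def q_def norm_mult norm_divide)
    also have "\<dots> \<le> M * cmod (1 - cnj a * u)"
      using insert.prems(2)[OF u(1)] by (intro mult_right_mono) auto
    finally show "cmod (g u) * cmod (u - a) \<le> M * cmod (1 - cnj a * u)" .
  qed
  have gz: "g z = 0" if "z \<in> Z" for z
  proof -
    have "z \<noteq> a" using that insert.hyps by auto
    then show ?thesis using insert.prems(5)[of z] that by (simp add: g_def q_def)
  qed
  have IH: "cmod (g 0) \<le> M * (\<Prod>z\<in>Z. cmod z)"
    by (rule insert.IH[OF holg gb insert.prems(3)]) (use insert.prems(4) gz in auto)
  have "f 0 = - a * g 0" using a by (simp add: g_def q_def)
  then have "cmod (f 0) = cmod a * cmod (g 0)" by (simp add: norm_mult)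
  also have "\<dots> \<le> cmod a * (M * (\<Prod>z\<in>Z. cmod z))"
    using IH by (intro mult_left_mono) auto
  finally show ?case using insert.hyps by (simp add: mult_ac)
qed


lemma disk_zero:
  fixes f :: "complex \<Rightarrow> complex" and zs :: "nat \<Rightarrow> real"
  assumes holf: "f holomorphic_on ball 0 1" and bnd: "\<And>z. cmod z < 1 \<Longrightarrow> cmod (f z) \<le> M"
    and zs: "\<And>k. 0 < zs k" "\<And>k. zs k < 1" "inj zs" "\<And>k. f (of_real (zs k)) = 0"
    and ns: "\<not> summable (\<lambda>k. 1 - zs k)"
  shows "f 0 = 0"
proof (rule ccontr)
  assume f0: "f 0 \<noteq> 0"
  have M: "0 \<le> M" using order_trans[OF norm_ge_zero bnd[of 0]] by simp
  have P: "cmod (f 0) \<le> M * (\<Prod>k<n. zs k)" for n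
  proof -
    have inj': "inj_on (\<lambda>k. complex_of_real (zs k)) {..<n}"
      using zs(3) by (auto simp: inj_on_def inj_def)
    have "cmod (f 0) \<le> M * (\<Prod>z\<in>(\<lambda>k. complex_of_real (zs k)) ` {..<n}. cmod z)"
      by (rule jensen_finite[OF _ holf bnd M]) (use zs in \<open>auto simp: less_imp_le less_imp_neq[OF zs(1), symmetric]\<close>)
    also have "(\<Prod>z\<in>(\<lambda>k. complex_of_real (zs k)) ` {..<n}. cmod z) = (\<Prod>k<n. zs k)"
      using zs(1) by (subst prod.reindex[OF inj']) (auto intro!: prod.cong simp: less_imp_le)
    finally show ?thesis .
  qed
  have f0pos: "0 < cmod (f 0)" using f0 by simp
  have Mpos: "0 < M" using P[of 0] f0pos by (simp only: lessThan_0 prod.empty mult_1_right)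
  have E: "(\<Prod>k<n. zs k) \<le> exp (- (\<Sum>k<n. 1 - zs k))" for n
  proof -
    have "(\<Prod>k<n. zs k) \<le> (\<Prod>k<n. exp (- (1 - zs k)))"
      using zs(1) by (intro prod_mono) (auto simp: less_imp_le intro: order_trans[OF _ exp_ge_add_one_self])
    also have "\<dots> = exp (- (\<Sum>k<n. 1 - zs k))"
    proof -
      have "(\<Sum>k<n. - (1 - zs k)) = - (\<Sum>k<n. 1 - zs k)" by (rule sum_negf)
      then show ?thesis by (simp add: exp_sum[symmetric])
    qed
    finally show ?thesis .
  qed
  have "(\<Sum>k<n. 1 - zs k) \<le> ln (M / cmod (f 0))" for n
  proof -
    have "cmod (f 0) / M \<le> exp (- (\<Sum>k<n. 1 - zs k))"
    proof -
      have "M * (\<Prod>k<n. zs k) \<le> M * exp (- (\<Sum>k<n. 1 - zs k))"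
        using E[of n] Mpos by (intro mult_left_mono) auto
      then have "cmod (f 0) \<le> exp (- (\<Sum>k<n. 1 - zs k)) * M"
        using P[of n] by (simp add: mult.commute)
      then show ?thesis using Mpos by (simp add: pos_divide_le_eq)
    qed
    then have "ln (cmod (f 0) / M) \<le> ln (exp (- (\<Sum>k<n. 1 - zs k)))"
      using f0pos Mpos by (subst ln_le_cancel_iff) auto
    then have "ln (cmod (f 0) / M) \<le> - (\<Sum>k<n. 1 - zs k)" by simp
    then show ?thesis using f0 Mpos by (simp add: ln_div)
  qed
  then have "summable (\<lambda>k. 1 - zs k)"
    by (rule summableI_nonneg_bounded[rotated]) (use zs(2) in \<open>simp add: less_imp_le\<close>)
  with ns show False by simp
qed


lemma Re_cayley_pos:
  fixes z :: complex
  assumes "cmod z < 1"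
  shows "0 < Re ((1 + z) / (1 - z))"
proof -
  have nz: "1 - z \<noteq> 0" using assms by auto
  have "(cmod z)^2 < 1" using assms by (simp add: power_less_one_iff)
  then have "Re z ^ 2 + Im z ^ 2 < 1" by (simp add: cmod_power2)
  then have "0 < (1 + Re z) * (1 - Re z) + Im z * (- Im z)"
    by (simp add: algebra_simps power2_eq_square)
  moreover have "0 < (cmod (1 - z))^2" using nz by simp
  ultimately have "0 < ((1 + Re z) * (1 - Re z) + Im z * (- Im z)) / (cmod (1 - z))^2"
    by (rule divide_pos_pos)
  then show ?thesis by (simp only: Re_divide) (simp add: cmod_power2)
qed

lemma halfplane_zero:
  fixes f :: "complex \<Rightarrow> complex" and w :: "nat \<Rightarrow> real"
  assumes holf: "f holomorphic_on {s. 0 < Re s}"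
    and bnd: "\<And>s. 0 < Re s \<Longrightarrow> cmod (f s) \<le> M"
    and wpos: "\<And>k. 0 < w k"
    and wgap1: "\<And>k. w k + c \<le> w (Suc k)" and wgap2: "\<And>k. w (Suc k) \<le> w k + C"
    and c: "0 < c"
    and wz: "\<And>k. f (of_real (w k)) = 0"
    and r: "0 < r"
  shows "f (of_real r) = 0"
proof -
  define \<phi> where "\<phi> z = of_real r * ((1 + z) / (1 - z))" for z :: complex
  define F where "F = f \<circ> \<phi>"
  have \<phi>in: "0 < Re (\<phi> z)" if "cmod z < 1" for z
  proof -
    have "Re (\<phi> z) = r * Re ((1 + z) / (1 - z))"
      unfolding \<phi>_def by (simp only: times_complex.sel Re_complex_of_real Im_complex_of_real mult_zero_left diff_zero)
    then show ?thesis using Re_cayley_pos[OF that] r by simp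
  qed
  have hol\<phi>: "\<phi> holomorphic_on ball 0 1"
    unfolding \<phi>_def by (intro holomorphic_intros) auto
  have holF: "F holomorphic_on ball 0 1"
    unfolding F_def
    by (rule holomorphic_on_compose_gen[OF hol\<phi> holf]) (use \<phi>in in auto)
  have bndF: "cmod (F z) \<le> M" if "cmod z < 1" for z
    using bnd[OF \<phi>in[OF that]] by (simp add: F_def)
  have wlow: "w 0 + real k * c \<le> w k" for k
  proof (induction k)
    case (Suc k) then show ?case using wgap1[of k] by (simp add: algebra_simps)
  qed simp
  have wup: "w (K + k) \<le> w K + real k * C" for K k
  proof (induction k)
    case (Suc k) then show ?case using wgap2[of "K + k"] by (simp add: algebra_simps)
  qed simp
  have C: "0 < C" using wgap1[of 0] wgap2[of 0] c by simp
  obtain K :: nat where K: "r < real K * c"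
    using reals_Archimedean3[OF c] by blast
  have wK: "r < w (K + k)" for k
  proof -
    have "w 0 + real (K + k) * c \<le> w (K + k)" by (rule wlow)
    moreover have "real K * c \<le> real (K + k) * c" using c by (intro mult_right_mono) auto
    ultimately show ?thesis using K wpos[of 0] by linarith
  qed
  define zs where "zs k = (w (K + k) - r) / (w (K + k) + r)" for k
  have zs0: "0 < zs k" for k using wK[of k] r by (simp add: zs_def)
  have zs1: "zs k < 1" for k using wK[of k] r by (simp add: zs_def divide_less_eq)
  have "strict_mono zs"
  proof (rule strict_mono_Suc_iff[THEN iffD2], intro allI)
    fix k
    have a: "w (K + k) < w (K + Suc k)" using wgap1[of "K + k"] c by simp
    have p1: "0 < w (K + k) + r" "0 < w (K + Suc k) + r" using wK[of k] wK[of "Suc k"] r by auto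
    have "(w (K + k) - r) * (w (K + Suc k) + r) < (w (K + Suc k) - r) * (w (K + k) + r)"
      using a r by (simp add: algebra_simps)
    then show "zs k < zs (Suc k)" using p1 by (simp add: zs_def divide_simps)
  qed
  then have injzs: "inj zs" by (rule strict_mono_imp_inj_on)
  have Fz: "F (of_real (zs k)) = 0" for k
  proof -
    have p: "0 < w (K + k) + r" using wK[of k] r by auto
    have "\<phi> (of_real (zs k)) = of_real (r * ((1 + zs k) / (1 - zs k)))"
      by (simp add: \<phi>_def)
    also have "r * ((1 + zs k) / (1 - zs k)) = w (K + k)"
    proof -
      have e1: "1 + zs k = 2 * w (K + k) / (w (K + k) + r)" using p by (simp add: zs_def field_simps)
      have e2: "1 - zs k = 2 * r / (w (K + k) + r)" using p by (simp add: zs_def field_simps)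
      have "(2 * w (K + k) / (w (K + k) + r)) / (2 * r / (w (K + k) + r)) = w (K + k) / r"
        using p r by (simp add: divide_simps)
      then show ?thesis unfolding e1 e2 using r by simp
    qed
    finally show ?thesis by (simp add: F_def wz)
  qed
  have ns: "\<not> summable (\<lambda>k. 1 - zs k)"
  proof
    assume s: "summable (\<lambda>k. 1 - zs k)"
    define \<alpha> where "\<alpha> = 2 * r / (w K + r + C)"
    have \<alpha>: "0 < \<alpha>" using r C wpos[of K] by (simp add: \<alpha>_def)
    have "summable (\<lambda>k. \<alpha> * (1 / real (Suc k)))"
    proof (rule summable_comparison_test[OF _ s], intro exI allI impI)
      fix k :: nat
      have p: "0 < w (K + k) + r" using wK[of k] r by auto
      have eq: "1 - zs k = 2 * r / (w (K + k) + r)" using p by (simp add: zs_def field_simps)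
      have "w (K + k) + r \<le> (w K + r + C) * real (Suc k)"
      proof -
        have "0 \<le> r * real k" "0 \<le> real k * w K" using r wpos[of K] by auto
        moreover have "(w K + r + C) * real (Suc k) = w K + r + C + C * real k + r * real k + real k * w K"
          by (simp add: algebra_simps)
        moreover have "real k * C = C * real k" by (rule mult.commute)
        ultimately show ?thesis using wup[of K k] C r wpos[of K] by (smt (verit))
      qed
      then have "2 * r / ((w K + r + C) * real (Suc k)) \<le> 2 * r / (w (K + k) + r)"
        using p r by (intro divide_left_mono) auto
      then have "\<alpha> * (1 / real (Suc k)) \<le> 2 * r / (w (K + k) + r)"
        unfolding \<alpha>_def by simp
      then show "norm (\<alpha> * (1 / real (Suc k))) \<le> 1 - zs k"
        using \<alpha> eq by simp
    qed
    then have "summable (\<lambda>k. inverse \<alpha> * (\<alpha> * (1 / real (Suc k))))"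
      by (rule summable_mult)
    then have "summable (\<lambda>k. 1 / real (Suc k))" using \<alpha> by simp
    then have "summable (\<lambda>k. inverse (real k))"
      by (subst summable_Suc_iff[symmetric]) (simp add: divide_inverse)
    then show False using not_summable_harmonic by blast
  qed
  have "F 0 = 0"
    by (rule disk_zero[OF holF bndF zs0 zs1 injzs Fz ns])
  then show ?thesis by (simp add: F_def \<phi>_def)
qed





definition TR :: "(nat \<Rightarrow> real) \<Rightarrow> real \<Rightarrow> real" where
  "TR u t = (\<Sum>j. 1 / (t - u j)^2)"

definition TC :: "(nat \<Rightarrow> real) \<Rightarrow> complex \<Rightarrow> complex" where
  "TC u s = (\<Sum>j. 1 / (s - of_real (u j))^2)"

definition gapseq :: "real \<Rightarrow> (nat \<Rightarrow> real) \<Rightarrow> bool" where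
  "gapseq c u \<longleftrightarrow> 0 < c \<and> (\<forall>j. u (Suc j) + c \<le> u j)"

lemma gapseq_lower:
  assumes "gapseq c u" shows "u j + real j * c \<le> u 0"
proof (induction j)
  case (Suc j) then show ?case using assms by (auto simp: gapseq_def algebra_simps dest: spec[of _ j])
qed simp

lemma gapseq_Suc: "gapseq c u \<Longrightarrow> gapseq c (\<lambda>j. u (Suc j))"
  by (simp add: gapseq_def)

lemma gapseq_mono: "gapseq c u \<Longrightarrow> u j \<le> u 0"
  using gapseq_lower[of c u j] by (auto simp: gapseq_def intro: order_trans[rotated])

lemma summable_inv_Suc_sq: "summable (\<lambda>j. inverse (real (Suc j) ^ 2))"
  using summable_Suc_iff[of "\<lambda>n. inverse (real n ^ 2)"] inverse_power_summable[of 2, where 'a = real]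
  by simp

lemma TR_summable_bound:
  assumes g: "gapseq c u" and t: "u 0 < t"
  shows "1 / (t - u j)^2 \<le> inverse ((min (t - u 0) c)^2) * inverse (real (Suc j) ^ 2)"
proof -
  define m where "m = min (t - u 0) c"
  have m: "0 < m" using g t by (simp add: m_def gapseq_def)
  have "m * real (Suc j) = m + real j * m" by (simp add: algebra_simps)
  also have "\<dots> \<le> (t - u 0) + real j * c"
    by (intro add_mono mult_left_mono) (auto simp: m_def)
  also have "\<dots> \<le> t - u j" using gapseq_lower[OF g, of j] by simp
  finally have le: "m * real (Suc j) \<le> t - u j" .
  have pos: "0 < m * real (Suc j)" using m by simp
  have tpos: "0 < t - u j" using le pos by linarith
  have "(m * real (Suc j))^2 \<le> (t - u j)^2"
    using le pos by (intro power_mono) auto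
  then have "1 / (t - u j)^2 \<le> 1 / (m * real (Suc j))^2"
    using pos tpos by (intro divide_left_mono mult_pos_pos) auto
  also have "1 / (m * real (Suc j))^2 = inverse (m^2) * inverse (real (Suc j)^2)"
    by (simp only: power_mult_distrib divide_inverse mult_1_left inverse_mult_distrib)
  finally show ?thesis by (simp only: m_def)
qed

lemma TR_summable:
  assumes g: "gapseq c u" and t: "u 0 < t"
  shows "summable (\<lambda>j. 1 / (t - u j)^2)"
proof (rule summable_comparison_test'[where N = 0])
  show "summable (\<lambda>j. inverse ((min (t - u 0) c)^2) * inverse (real (Suc j) ^ 2))"
    by (intro summable_mult summable_inv_Suc_sq)
  fix j show "norm (1 / (t - u j)^2) \<le> inverse ((min (t - u 0) c)^2) * inverse (real (Suc j) ^ 2)"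
    using TR_summable_bound[OF g t, of j] by simp
qed

lemma TC_term_bound:
  assumes g: "gapseq c u" and p: "u 0 < p" and s: "p \<le> Re s"
  shows "cmod (1 / (s - of_real (u j))^2) \<le> 1 / (p - u j)^2"
proof -
  have uj: "u j \<le> u 0" by (rule gapseq_mono[OF g])
  have "p - u j \<le> Re (s - of_real (u j))" using s by simp
  also have "\<dots> \<le> cmod (s - of_real (u j))" by (rule complex_Re_le_cmod)
  finally have le: "p - u j \<le> cmod (s - of_real (u j))" .
  have pos: "0 < p - u j" using p uj by simp
  have "(p - u j)^2 \<le> cmod (s - of_real (u j))^2" using le pos by (intro power_mono) auto
  moreover have "0 < cmod (s - of_real (u j))" using le pos by linarith
  ultimately have "1 / cmod (s - of_real (u j))^2 \<le> 1 / (p - u j)^2"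
    using pos by (intro divide_left_mono mult_pos_pos) auto
  then show ?thesis by (simp add: norm_divide norm_power)
qed

lemma TC_bound:
  assumes g: "gapseq c u" and p: "u 0 < p" and s: "p \<le> Re s"
  shows "cmod (TC u s) \<le> TR u p"
  unfolding TC_def TR_def
  by (rule norm_suminf_le[OF TC_term_bound[OF g p s] TR_summable[OF g p]])

lemma TC_holomorphic:
  assumes g: "gapseq c u" and p: "u 0 \<le> p"
  shows "TC u holomorphic_on {s. p < Re s}"
proof -
  have eq: "TC u = (\<lambda>s. \<Sum>j. 1 / (s - of_real (u j))^2)" by (simp add: TC_def fun_eq_iff)
  show ?thesis unfolding eq
  proof (rule holomorphic_uniform_sequence[where f = "\<lambda>n s. \<Sum>j<n. 1 / (s - of_real (u j))^2"])
    show "open {s. p < Re s}" by (simp add: open_halfspace_Re_gt)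
    fix n
    show "(\<lambda>s. \<Sum>j<n. 1 / (s - of_real (u j))^2) holomorphic_on {s. p < Re s}"
    proof (intro holomorphic_intros)
      fix j s assume "s \<in> {s. p < Re s}"
      moreover have "u j \<le> u 0" by (rule gapseq_mono[OF g])
      ultimately show "(s - of_real (u j))^2 \<noteq> 0" using p by auto
    qed
  next
    fix x assume x: "x \<in> {s. p < Re s}"
    define d where "d = (Re x - p) / 2"
    have d: "0 < d" using x by (simp add: d_def)
    have sub: "cball x d \<subseteq> {s. p < Re s}"
    proof
      fix y assume "y \<in> cball x d"
      then have "\<bar>Re x - Re y\<bar> \<le> d"
        using abs_Re_le_cmod[of "x - y"] by (simp add: dist_norm)
      then have "Re x - Re y \<le> d" by (rule abs_le_D1)
      then have "p < Re y" using d unfolding d_def by (smt (verit) field_sum_of_halves)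
      then show "y \<in> {s. p < Re s}" by simp
    qed
    have ul: "uniform_limit (cball x d) (\<lambda>n s. \<Sum>j<n. 1 / (s - of_real (u j))^2)
                (\<lambda>s. \<Sum>j. 1 / (s - of_real (u j))^2) sequentially"
    proof (rule Weierstrass_m_test)
      show "summable (\<lambda>j. 1 / ((p + d) - u j)^2)"
        by (rule TR_summable[OF g]) (use p d in simp)
      fix j y assume "y \<in> cball x d"
      then have "\<bar>Re x - Re y\<bar> \<le> d"
        using abs_Re_le_cmod[of "x - y"] by (simp add: dist_norm)
      then have "Re x - Re y \<le> d" by (rule abs_le_D1)
      then have pd: "p + d \<le> Re y" unfolding d_def by (smt (verit) field_sum_of_halves)
      show "cmod (1 / (y - of_real (u j))^2) \<le> 1 / ((p + d) - u j)^2"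
        by (rule TC_term_bound[OF g _ pd]) (use p d in simp)
    qed
    show "\<exists>d>0. cball x d \<subseteq> {s. p < Re s} \<and>
           uniform_limit (cball x d) (\<lambda>n s. \<Sum>j<n. 1 / (s - of_real (u j))^2)
             (\<lambda>s. \<Sum>j. 1 / (s - of_real (u j))^2) sequentially"
      using d sub ul by blast
  qed
qed

lemma TC_of_real:
  assumes g: "gapseq c u" and t: "u 0 < t"
  shows "TC u (of_real t) = of_real (TR u t)"
  unfolding TC_def TR_def
  using suminf_of_real[OF TR_summable[OF g t], where 'a = complex] by simp


lemma TR_head:
  assumes g: "gapseq c u" and t: "u 0 < t"
  shows "1 / (t - u 0)^2 \<le> TR u t"
  unfolding TR_def
  using sum_le_suminf[OF TR_summable[OF g t], of "{0}"] by simp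

lemma TR_nonneg:
  assumes g: "gapseq c u" and t: "u 0 < t"
  shows "0 \<le> TR u t"
  unfolding TR_def by (rule suminf_nonneg[OF TR_summable[OF g t]]) simp

lemma TR_anti:
  assumes g: "gapseq c u" and t: "u 0 < t1" "t1 \<le> t2"
  shows "TR u t2 \<le> TR u t1"
  unfolding TR_def
proof (rule suminf_le)
  show "summable (\<lambda>j. 1 / (t2 - u j)^2)" by (rule TR_summable[OF g]) (use t in simp)
  show "summable (\<lambda>j. 1 / (t1 - u j)^2)" by (rule TR_summable[OF g]) (use t in simp)
  fix j
  have "u j \<le> u 0" by (rule gapseq_mono[OF g])
  then have p: "0 < t1 - u j" using t by simp
  have "(t1 - u j)^2 \<le> (t2 - u j)^2" using p t by (intro power_mono) auto
  moreover have "0 < (t2 - u j)^2 * (t1 - u j)^2" using p t by (intro mult_pos_pos) auto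
  ultimately show "1 / (t2 - u j)^2 \<le> 1 / (t1 - u j)^2"
    by (intro divide_left_mono) auto
qed

lemma TR_Suc:
  assumes g: "gapseq c u" and t: "u 0 < t"
  shows "TR (\<lambda>j. u (Suc j)) t = TR u t - 1 / (t - u 0)^2"
  unfolding TR_def by (rule suminf_split_head[OF TR_summable[OF g t]])

lemma key_lt:
  assumes gu: "gapseq c u" and gv: "gapseq c v" and u0: "u 0 < 0" and vu: "v 0 < u 0"
    and wnn: "\<And>k. 0 \<le> w k"
    and wgap1: "\<And>k. w k + c' \<le> w (Suc k)" and wgap2: "\<And>k. w (Suc k) \<le> w k + C"
    and c': "0 < c'"
    and eq: "\<And>k. TR u (w k) = TR v (w k)"
  shows False
proof -
  define R where "R = TR v (u 0)"
  have R: "0 \<le> R" unfolding R_def by (rule TR_nonneg[OF gv vu])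
  define \<epsilon> where "\<epsilon> = min (- u 0 / 2) (1 / (R + 1))"
  have \<epsilon>: "0 < \<epsilon>" using u0 R by (simp add: \<epsilon>_def)
  define t0 where "t0 = u 0 + \<epsilon>"
  define p where "p = u 0 + \<epsilon> / 2"
  have t0neg: "t0 < 0" using u0 by (simp add: t0_def \<epsilon>_def)
  have pu: "u 0 < p" "p < t0" using \<epsilon> by (auto simp: p_def t0_def)
  define g where "g s = TC u (s + of_real p) - TC v (s + of_real p)" for s
  have hol1: "(\<lambda>s. TC u (s + of_real p)) holomorphic_on {s. 0 < Re s}"
  proof -
    have "((TC u) \<circ> (\<lambda>s. s + of_real p)) holomorphic_on {s. 0 < Re s}"
    proof (rule holomorphic_on_compose_gen)
      show "(\<lambda>s. s + of_real p) holomorphic_on {s. 0 < Re s}" by (intro holomorphic_intros)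
      show "TC u holomorphic_on {s. p < Re s}" by (rule TC_holomorphic[OF gu]) (use pu in simp)
      show "(\<lambda>s. s + of_real p) ` {s. 0 < Re s} \<subseteq> {s. p < Re s}" by auto
    qed
    then show ?thesis by (simp add: o_def)
  qed
  have hol2: "(\<lambda>s. TC v (s + of_real p)) holomorphic_on {s. 0 < Re s}"
  proof -
    have "((TC v) \<circ> (\<lambda>s. s + of_real p)) holomorphic_on {s. 0 < Re s}"
    proof (rule holomorphic_on_compose_gen)
      show "(\<lambda>s. s + of_real p) holomorphic_on {s. 0 < Re s}" by (intro holomorphic_intros)
      show "TC v holomorphic_on {s. p < Re s}" by (rule TC_holomorphic[OF gv]) (use pu vu in simp)
      show "(\<lambda>s. s + of_real p) ` {s. 0 < Re s} \<subseteq> {s. p < Re s}" by auto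
    qed
    then show ?thesis by (simp add: o_def)
  qed
  have holg: "g holomorphic_on {s. 0 < Re s}"
    unfolding g_def by (intro holomorphic_intros hol1 hol2)
  have bndg: "cmod (g s) \<le> TR u p + TR v p" if "0 < Re s" for s
  proof -
    have "cmod (g s) \<le> cmod (TC u (s + of_real p)) + cmod (TC v (s + of_real p))"
      unfolding g_def by (rule norm_triangle_ineq4)
    also have "\<dots> \<le> TR u p + TR v p"
      using that pu vu by (intro add_mono TC_bound[OF gu] TC_bound[OF gv]) auto
    finally show ?thesis .
  qed
  have wz: "g (of_real (w k - p)) = 0" for k
  proof -
    have a: "u 0 < w k" "v 0 < w k" using wnn[of k] u0 vu by (auto intro: less_le_trans)
    have "g (of_real (w k - p)) = TC u (of_real (w k)) - TC v (of_real (w k))"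
      by (simp add: g_def)
    also have "\<dots> = 0" using TC_of_real[OF gu a(1)] TC_of_real[OF gv a(2)] eq[of k] by simp
    finally show ?thesis .
  qed
  have "g (of_real (t0 - p)) = 0"
  proof (rule halfplane_zero[OF holg bndg _ _ _ c' wz])
    show "0 < w k - p" for k using wnn[of k] pu t0neg by linarith
    show "w k - p + c' \<le> w (Suc k) - p" for k using wgap1[of k] by simp
    show "w (Suc k) - p \<le> w k - p + C" for k using wgap2[of k] by simp
    show "0 < t0 - p" using pu by simp
  qed (simp)
  then have "TC u (of_real t0) = TC v (of_real t0)" by (simp add: g_def)
  then have eq0: "TR u t0 = TR v t0"
    using TC_of_real[OF gu, of t0] TC_of_real[OF gv, of t0] pu vu by simp
  have "1 / \<epsilon>^2 \<le> TR u t0" using TR_head[OF gu, of t0] pu by (simp add: t0_def)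
  moreover have "TR v t0 \<le> R" unfolding R_def
    using TR_anti[OF gv, of "u 0" t0] vu pu by simp
  moreover have "R < 1 / \<epsilon>^2"
  proof -
    have "\<epsilon> \<le> 1 / (R + 1)" by (simp add: \<epsilon>_def)
    then have "R + 1 \<le> 1 / \<epsilon>" using \<epsilon> R by (simp add: field_simps)
    then have "(R + 1)^2 \<le> (1 / \<epsilon>)^2" using R by (intro power_mono) auto
    moreover have "R < (R + 1)^2"
    proof -
      have "0 \<le> R * R" using R by simp
      moreover have "(R + 1)^2 = R * R + 2 * R + 1" by (simp add: power2_eq_square algebra_simps)
      ultimately show ?thesis using R by linarith
    qed
    ultimately show ?thesis by (simp add: power_divide)
  qed
  ultimately show False using eq0 by linarith
qed

lemma key_eq:
  assumes gu: "gapseq c u" and gv: "gapseq c v" and u0: "u 0 < 0" and v0: "v 0 < 0"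
    and wnn: "\<And>k. 0 \<le> w k"
    and wgap1: "\<And>k. w k + c' \<le> w (Suc k)" and wgap2: "\<And>k. w (Suc k) \<le> w k + C"
    and c': "0 < c'"
    and eq: "\<And>k. TR u (w k) = TR v (w k)"
  shows "u 0 = v 0"
proof (rule ccontr)
  assume "u 0 \<noteq> v 0"
  then consider "v 0 < u 0" | "u 0 < v 0" by linarith
  then show False
  proof cases
    case 1 then show ?thesis using key_lt[of c u v w c' C, OF gu gv u0 1 wnn wgap1 wgap2 c' eq] by simp
  next
    case 2 then show ?thesis using key_lt[of c v u w c' C, OF gv gu v0 2 wnn wgap1 wgap2 c' eq[symmetric]] by simp
  qed
qed

lemma seq_eq:
  assumes "gapseq c u" "gapseq c v" "u 0 < 0" "v 0 < 0"
    and wnn: "\<And>k. 0 \<le> w k"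
    and wgap1: "\<And>k. w k + c' \<le> w (Suc k)" and wgap2: "\<And>k. w (Suc k) \<le> w k + C"
    and c': "0 < c'"
    and "\<And>k. TR u (w k) = TR v (w k)"
  shows "u j = v j"
  using assms(1-4,9)
proof (induction j arbitrary: u v)
  case 0
  show ?case by (rule key_eq[of c u v w c' C, OF 0(1-4) wnn wgap1 wgap2 c' 0(5)])
next
  case (Suc j)
  have e0: "u 0 = v 0" by (rule key_eq[of c u v w c' C, OF Suc.prems(1-4) wnn wgap1 wgap2 c' Suc.prems(5)])
  have "u (Suc 0) < 0" using Suc.prems(1,3) by (auto simp: gapseq_def dest: spec[of _ 0])
  moreover have "v (Suc 0) < 0" using Suc.prems(2,4) by (auto simp: gapseq_def dest: spec[of _ 0])
  moreover have "TR (\<lambda>j. u (Suc j)) (w k) = TR (\<lambda>j. v (Suc j)) (w k)" for k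
  proof -
    have a: "u 0 < w k" "v 0 < w k" using wnn[of k] Suc.prems(3,4) by (auto intro: less_le_trans)
    show ?thesis using TR_Suc[OF Suc.prems(1) a(1)] TR_Suc[OF Suc.prems(2) a(2)] e0 Suc.prems(5)[of k]
      by simp
  qed
  ultimately have "u (Suc j) = v (Suc j)"
    using Suc.IH[of "\<lambda>j. u (Suc j)" "\<lambda>j. v (Suc j)"] gapseq_Suc[OF Suc.prems(1)] gapseq_Suc[OF Suc.prems(2)]
    by simp
  then show ?case .
qed




lemma config_N:
  fixes x :: "int \<Rightarrow> real"
  assumes sm: "strict_mono x" and c: "0 < c" and gap: "\<And>n. c \<le> x n - x (n - 1)"
  obtains N where "\<And>n. 0 \<le> x n \<longleftrightarrow> N \<le> n"
proof -
  have up: "x 0 + real k * c \<le> x (int k)" for k :: nat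
  proof (induction k)
    case (Suc k)
    have "c \<le> x (int k + 1) - x (int k)" using gap[of "int k + 1"] by simp
    then show ?case using Suc by (simp add: algebra_simps)
  qed simp
  have down: "x (- int k) \<le> x 0 - real k * c" for k :: nat
  proof (induction k)
    case (Suc k)
    have e: "- int k - 1 = - int (Suc k)" by simp
    have "c \<le> x (- int k) - x (- int (Suc k))" using gap[of "- int k"] unfolding e .
    then show ?case using Suc by (simp add: algebra_simps)
  qed simp
  obtain k1 :: nat where k1: "- x 0 < real k1 * c" using reals_Archimedean3[OF c] by blast
  obtain k2 :: nat where k2: "x 0 < real k2 * c" using reals_Archimedean3[OF c] by blast
  define b where "b = - int k2"
  have xb: "x b < 0" using down[of k2] k2 by (simp add: b_def)
  define P where "P k \<longleftrightarrow> 0 \<le> x (b + int k)" for k :: nat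
  have "P (k1 + k2)" using up[of k1] k1 by (simp add: P_def b_def)
  then have PK: "P (LEAST k. P k)" by (rule LeastI)
  define K where "K = (LEAST k. P k)"
  have K0: "K \<noteq> 0"
  proof
    assume "K = 0"
    then have "P 0" using PK by (simp add: K_def)
    then show False using xb by (simp add: P_def)
  qed
  have nP: "\<not> P (K - 1)" using K0 by (intro not_less_Least) (auto simp: K_def)
  define N where "N = b + int K"
  have "0 \<le> x n \<longleftrightarrow> N \<le> n" for n
  proof
    assume "N \<le> n"
    then have "x N \<le> x n" using sm by (simp add: strict_mono_less_eq)
    moreover have "0 \<le> x N" using PK by (simp add: N_def K_def P_def)
    ultimately show "0 \<le> x n" by simp
  next
    assume h: "0 \<le> x n"
    show "N \<le> n"
    proof (rule ccontr)
      assume "\<not> N \<le> n"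
      then have "n \<le> b + int (K - 1)" using K0 by (simp add: N_def of_nat_diff)
      then have "x n \<le> x (b + int (K - 1))" using sm by (simp add: strict_mono_less_eq)
      then show False using nP h by (simp add: P_def)
    qed
  qed
  then show ?thesis by (rule that)
qed


lemma bridge:
  fixes x :: "int \<Rightarrow> real" and u :: "nat \<Rightarrow> real"
  assumes sm: "strict_mono x" and N: "\<And>n. 0 \<le> x n \<longleftrightarrow> N \<le> n"
    and W: "W = {r. \<exists>n. r = x n \<and> x n \<ge> 0}"
    and u: "u = (\<lambda>j. x (N - 1 - int j))" and gu: "gapseq c u"
    and nN: "N \<le> n" and eqm: "in_equilibrium F x n"
  shows "TR u (x n) + (\<Sum>r\<in>{r\<in>W. r < x n}. F (x n - r)) = (\<Sum>\<^sub>\<infinity>r\<in>{r\<in>W. x n < r}. F (r - x n))"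
proof -
  define w where "w = x n"
  have inj: "inj_on x A" for A using sm by (simp add: strict_mono_imp_inj_on inj_on_subset)
  have sa: "(\<lambda>m. F (x n - x m)) summable_on {..<n}"
    and sb: "(\<lambda>m. F (x m - x n)) summable_on {n<..}"
    and ec: "(\<Sum>\<^sub>\<infinity>m\<in>{..<n}. F (x n - x m)) = (\<Sum>\<^sub>\<infinity>m\<in>{n<..}. F (x m - x n))"
    using eqm by (auto simp: in_equilibrium_def)
  have w0: "0 \<le> w" using N nN by (simp add: w_def)
  have u0: "u 0 < w" using N[of "N - 1"] w0 by (simp add: u)
  have img1: "x ` {n<..} = {r\<in>W. w < r}"
  proof
    show "x ` {n<..} \<subseteq> {r\<in>W. w < r}"
    proof
      fix r assume "r \<in> x ` {n<..}"
      then obtain m where m: "n < m" "r = x m" by auto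
      then have "w < x m" using sm by (simp add: w_def strict_mono_less)
      then show "r \<in> {r\<in>W. w < r}" using m w0 W by auto
    qed
    show "{r\<in>W. w < r} \<subseteq> x ` {n<..}"
    proof
      fix r assume "r \<in> {r\<in>W. w < r}"
      then obtain m where m: "r = x m" "w < x m" using W by auto
      then have "n < m" using sm by (simp add: w_def strict_mono_less)
      then show "r \<in> x ` {n<..}" using m by auto
    qed
  qed
  have R: "(\<Sum>\<^sub>\<infinity>m\<in>{n<..}. F (x m - x n)) = (\<Sum>\<^sub>\<infinity>r\<in>{r\<in>W. w < r}. F (r - w))"
    unfolding img1[symmetric] using infsum_reindex[OF inj[of "{n<..}"], of "\<lambda>r. F (r - w)"]
    by (simp add: o_def w_def)
  have img2: "x ` {N..<n} = {r\<in>W. r < w}"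
  proof
    show "x ` {N..<n} \<subseteq> {r\<in>W. r < w}"
    proof
      fix r assume "r \<in> x ` {N..<n}"
      then obtain m where m: "N \<le> m" "m < n" "r = x m" by auto
      then have "x m < w" using sm by (simp add: w_def strict_mono_less)
      moreover have "0 \<le> x m" using N m by simp
      ultimately show "r \<in> {r\<in>W. r < w}" using m W by auto
    qed
    show "{r\<in>W. r < w} \<subseteq> x ` {N..<n}"
    proof
      fix r assume "r \<in> {r\<in>W. r < w}"
      then obtain m where m: "r = x m" "0 \<le> x m" "x m < w" using W by auto
      then have "m < n" using sm by (simp add: w_def strict_mono_less)
      moreover have "N \<le> m" using N m by simp
      ultimately show "r \<in> x ` {N..<n}" using m by auto
    qed
  qed
  have L2: "(\<Sum>\<^sub>\<infinity>m\<in>{N..<n}. F (x n - x m)) = (\<Sum>r\<in>{r\<in>W. r < w}. F (w - r))"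
    unfolding img2[symmetric] using sum.reindex[OF inj[of "{N..<n}"], of "\<lambda>r. F (w - r)"]
    by (simp add: o_def w_def)
  define g where "g j = N - 1 - int j" for j :: nat
  have bij: "bij_betw g UNIV {..<N}"
  proof (rule bij_betwI[where g = "\<lambda>m. nat (N - 1 - m)"])
    show "g \<in> UNIV \<rightarrow> {..<N}" by (auto simp: g_def)
    show "(\<lambda>m. nat (N - 1 - m)) \<in> {..<N} \<rightarrow> UNIV" by auto
    show "nat (N - 1 - g j) = j" for j by (simp add: g_def)
    show "g (nat (N - 1 - m)) = m" if "m \<in> {..<N}" for m using that by (simp add: g_def)
  qed
  have L1: "(\<Sum>\<^sub>\<infinity>m\<in>{..<N}. F (x n - x m)) = TR u w"
  proof -
    have "(\<Sum>\<^sub>\<infinity>m\<in>{..<N}. F (x n - x m)) = (\<Sum>\<^sub>\<infinity>j\<in>UNIV. F (x n - x (g j)))"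
      by (rule infsum_reindex_bij_betw[OF bij, symmetric])
    also have "\<dots> = (\<Sum>\<^sub>\<infinity>j\<in>UNIV. 1 / (w - u j)^2)"
      by (simp add: F_def u g_def w_def)
    also have "\<dots> = TR u w"
    proof -
      have "((\<lambda>j. 1 / (w - u j)^2) has_sum TR u w) UNIV"
        unfolding TR_def
        by (rule sums_nonneg_imp_has_sum[OF summable_sums[OF TR_summable[OF gu u0]]]) simp
      then show ?thesis by (rule infsumI)
    qed
    finally show ?thesis .
  qed
  have split: "{..<n} = {..<N} \<union> {N..<n}" using nN by auto
  have sa1: "(\<lambda>m. F (x n - x m)) summable_on {..<N}"
    by (rule summable_on_subset[OF sa]) (use nN in auto)
  have sa2: "(\<lambda>m. F (x n - x m)) summable_on {N..<n}"
    by (rule summable_on_subset[OF sa]) auto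
  have "(\<Sum>\<^sub>\<infinity>m\<in>{..<n}. F (x n - x m)) =
        (\<Sum>\<^sub>\<infinity>m\<in>{..<N}. F (x n - x m)) + (\<Sum>\<^sub>\<infinity>m\<in>{N..<n}. F (x n - x m))"
    unfolding split by (rule infsum_Un_disjoint[OF sa1 sa2]) auto
  then show ?thesis using ec R L1 L2 by (simp add: w_def)
qed


lemma negset:
  fixes x :: "int \<Rightarrow> real"
  assumes N: "\<And>n. 0 \<le> x n \<longleftrightarrow> N \<le> n"
  shows "{r. \<exists>n. r = x n \<and> x n < 0} = range (\<lambda>j. x (N - 1 - int j))"
proof
  show "{r. \<exists>n. r = x n \<and> x n < 0} \<subseteq> range (\<lambda>j. x (N - 1 - int j))"
  proof
    fix r assume "r \<in> {r. \<exists>n. r = x n \<and> x n < 0}"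
    then obtain n where n: "r = x n" "x n < 0" by auto
    then have "n < N" using N[of n] by linarith
    then have "n = N - 1 - int (nat (N - 1 - n))" by simp
    then show "r \<in> range (\<lambda>j. x (N - 1 - int j))" using n by (metis rangeI)
  qed
  show "range (\<lambda>j. x (N - 1 - int j)) \<subseteq> {r. \<exists>n. r = x n \<and> x n < 0}"
  proof
    fix r assume "r \<in> range (\<lambda>j. x (N - 1 - int j))"
    then obtain j where j: "r = x (N - 1 - int j)" by auto
    have "\<not> 0 \<le> x (N - 1 - int j)" using N[of "N - 1 - int j"] by simp
    then show "r \<in> {r. \<exists>n. r = x n \<and> x n < 0}" using j by auto
  qed
qed

lemma config_facts:
  fixes x :: "int \<Rightarrow> real"
  assumes ud: "uniformly_discrete x"
  obtains cx Cx N where "strict_mono x" "0 < cx" "\<And>n. cx \<le> x n - x (n - 1)" "\<And>n. x n - x (n - 1) \<le> Cx"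
    "\<And>n. 0 \<le> x n \<longleftrightarrow> N \<le> n"
proof -
  obtain cx Cx where sm: "strict_mono x" and c: "0 < cx" and g1: "\<And>n. cx \<le> x n - x (n - 1)"
    and g2: "\<And>n. x n - x (n - 1) \<le> Cx"
    using ud by (auto simp: uniformly_discrete_def configuration_def)
  obtain N where "\<And>n. 0 \<le> x n \<longleftrightarrow> N \<le> n" using config_N[OF sm c g1] by blast
  then show ?thesis using that sm c g1 g2 by blast
qed

lemma gapseq_config:
  fixes x :: "int \<Rightarrow> real"
  assumes c: "0 < c" "c \<le> cx" and g1: "\<And>n. cx \<le> x n - x (n - 1)"
  shows "gapseq c (\<lambda>j. x (N - 1 - int j))"
  unfolding gapseq_def
proof (intro conjI allI)
  show "0 < c" by (rule c(1))
  fix j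
  have e: "N - 1 - int j - 1 = N - 1 - int (Suc j)" by simp
  have "cx \<le> x (N - 1 - int j) - x (N - 1 - int (Suc j))" using g1[of "N - 1 - int j"] unfolding e .
  then show "x (N - 1 - int (Suc j)) + c \<le> x (N - 1 - int j)" using c by linarith
qed

theorem mainTheorem4:
  fixes x y :: "int \<Rightarrow> real" and W :: "real set"
  assumes "uniformly_discrete x" and "uniformly_discrete y"
    and "W = {r. \<exists>n. r = x n \<and> x n \<ge> 0}"
    and "W = {r. \<exists>n. r = y n \<and> y n \<ge> 0}"
    and "\<forall>n. x n \<in> W \<longrightarrow> in_equilibrium F x n"
    and "\<forall>n. y n \<in> W \<longrightarrow> in_equilibrium F y n"
  shows "{r. \<exists>n. r = x n \<and> x n < 0} = {r. \<exists>n. r = y n \<and> y n < 0}"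
proof -
  obtain cx Cx Nx where smx: "strict_mono x" and cx: "0 < cx" and gx1: "\<And>n. cx \<le> x n - x (n - 1)"
    and gx2: "\<And>n. x n - x (n - 1) \<le> Cx" and Nx: "\<And>n. 0 \<le> x n \<longleftrightarrow> Nx \<le> n"
    using config_facts[OF assms(1)] by blast
  obtain cy Cy Ny where smy: "strict_mono y" and cy: "0 < cy" and gy1: "\<And>n. cy \<le> y n - y (n - 1)"
    and gy2: "\<And>n. y n - y (n - 1) \<le> Cy" and Ny: "\<And>n. 0 \<le> y n \<longleftrightarrow> Ny \<le> n"
    using config_facts[OF assms(2)] by blast
  define c where "c = min cx cy"
  have c: "0 < c" "c \<le> cx" "c \<le> cy" using cx cy by (auto simp: c_def)
  define u where "u = (\<lambda>j. x (Nx - 1 - int j))"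
  define v where "v = (\<lambda>j. y (Ny - 1 - int j))"
  have gu: "gapseq c u" unfolding u_def by (rule gapseq_config[of c cx x, OF c(1,2) gx1])
  have gv: "gapseq c v" unfolding v_def by (rule gapseq_config[of c cy y, OF c(1,3) gy1])
  have u0: "u 0 < 0" using Nx[of "Nx - 1"] by (simp add: u_def)
  have v0: "v 0 < 0" using Ny[of "Ny - 1"] by (simp add: v_def)
  define wq where "wq k = x (Nx + int k)" for k
  have wnn: "0 \<le> wq k" for k using Nx[of "Nx + int k"] by (simp add: wq_def)
  have wg1: "wq k + cx \<le> wq (Suc k)" for k
    using gx1[of "Nx + int (Suc k)"] by (simp add: wq_def algebra_simps)
  have wg2: "wq (Suc k) \<le> wq k + Cx" for k
    using gx2[of "Nx + int (Suc k)"] by (simp add: wq_def algebra_simps)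
  have eq: "TR u (wq k) = TR v (wq k)" for k
  proof -
    have inW: "wq k \<in> W" using assms(3) wnn[of k] by (auto simp: wq_def)
    then obtain n' where n': "wq k = y n'" "0 \<le> y n'" using assms(4) by auto
    have bx: "TR u (x (Nx + int k)) + (\<Sum>r\<in>{r\<in>W. r < x (Nx + int k)}. F (x (Nx + int k) - r))
        = (\<Sum>\<^sub>\<infinity>r\<in>{r\<in>W. x (Nx + int k) < r}. F (r - x (Nx + int k)))"
      by (rule bridge[OF smx Nx assms(3) u_def gu]) (use assms(5) inW in \<open>auto simp: wq_def\<close>)
    have by': "TR v (y n') + (\<Sum>r\<in>{r\<in>W. r < y n'}. F (y n' - r))
        = (\<Sum>\<^sub>\<infinity>r\<in>{r\<in>W. y n' < r}. F (r - y n'))"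
      by (rule bridge[OF smy Ny assms(4) v_def gv]) (use assms(6) inW n' Ny in auto)
    show ?thesis using bx by' n'(1) by (simp add: wq_def)
  qed
  have uv: "u j = v j" for j
    by (rule seq_eq[of c u v wq cx Cx, OF gu gv u0 v0 wnn wg1 wg2 cx eq])
  have "{r. \<exists>n. r = x n \<and> x n < 0} = range u" unfolding u_def by (rule negset[OF Nx])
  also have "\<dots> = range v" using uv by (simp add: fun_eq_iff)
  also have "\<dots> = {r. \<exists>n. r = y n \<and> y n < 0}" unfolding v_def by (rule negset[OF Ny, symmetric])
  finally show ?thesis .
qed


end
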